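(* For any integers $b \ge 2$ and $n \ge 1$, let $X_0,\dots,X_{n-1}$ be produced by the balanced base-$b$ enumeration procedure described in the context, and for $\ell \in \{1,\dots,L\}$ and $d \in \{0,\dots,b-1\}$ let $c_{\ell,d}(n) = |\{k \in \{0,\dots,n-1\} : (X_k)_\ell = d\}|$. Then $\max_{\ell,d} c_{\ell,d}(n) - \min_{\ell,d} c_{\ell,d}(n) \le 1$. Equivalently, for each $\ell$, every digit $d$ appears either $\lfloor n/b \rfloor$ or $\lceil n/b \rceil$ times in position $\ell$ among $X_0,\dots,X_{n-1}$.
   Context: Balanced base-$b$ enumeration: given $b \ge 2$ and $n \ge 1$, let $L = \min\{\ell \ge 1 : b^\ell \ge n\}$. For $t = 0,1,\dots,b^{L-1}-1$ in increasing order, let $(j_2,\dots,j_L) \in \{0,\dots,b-1\}^{L-1}$ be the unique digits with $t = \sum_{r=2}^L j_r b^{L-r}$ (base-$b$ representation left-padded with zeros), and for $i = 0,1,\dots,b-1$ in increasing order output the vector $\bigl(i, (i+j_2) \bmod b, \dots, (i+j_L) \bmod b\bigr) \in \{0,\dots,b-1\}^L$. The outputs are indexed $X_0, X_1, \dots$ in the order produced, and the procedure stops as soon as $n$ vectors $X_0,\dots,X_{n-1}$ have been produced. $(X_k)_\ell$ denotes the $\ell$-th coordinate of $X_k$. *)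

theory Defs
  imports Main
begin

definition enum_len :: "nat \<Rightarrow> nat \<Rightarrow> nat" where
  "enum_len b n = (LEAST l. 1 \<le> l \<and> n \<le> b ^ l)"

definition enum_vec :: "nat \<Rightarrow> nat \<Rightarrow> nat \<Rightarrow> nat \<Rightarrow> nat" where
  "enum_vec b n k l =
     (let L = enum_len b n; t = k div b; i = k mod b in
      if l = 1 then i else (i + (t div b ^ (L - l)) mod b) mod b)"

definition digit_count :: "nat \<Rightarrow> nat \<Rightarrow> nat \<Rightarrow> nat \<Rightarrow> nat" where
  "digit_count b n l d = card {k. k < n \<and> enum_vec b n k l = d}"

end

theory Submission
  imports Defs
begin

lemma mod_inj_aux0:
  fixes i j c b :: nat
  assumes "i \<le> j" "j < b" "(i + c) mod b = (j + c) mod b"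
  shows "i = j"
proof -
  have "b dvd (j + c) - (i + c)" using assms(1,3) mod_eq_dvd_iff_nat[of "i+c" "j+c" b] by simp
  then have "b dvd j - i" by simp
  moreover have "j - i < b" using assms by simp
  ultimately have "j - i = 0" by (metis dvd_imp_le neq0_conv not_le)
  then show ?thesis using assms(1) by simp
qed

lemma mod_inj_aux:
  fixes i j c b :: nat
  assumes "i < b" "j < b" "(i + c) mod b = (j + c) mod b"
  shows "i = j"
proof (cases "i \<le> j")
  case True then show ?thesis using mod_inj_aux0 assms by blast
next
  case False then show ?thesis using mod_inj_aux0[of j i b c] assms by simp
qed

lemma fin_aux1: "finite {k::nat. k < n \<and> Q k}"
  by (rule finite_subset[of _ "{..<n}"]) auto

lemma fin_aux2: "finite {k::nat. P k \<and> k < n \<and> Q k}"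
  by (rule finite_subset[of _ "{..<n}"]) auto

lemma full_count:
  fixes f :: "nat \<Rightarrow> nat"
  assumes b: "b > 0"
    and inj: "\<And>t i j. i < b \<Longrightarrow> j < b \<Longrightarrow> f (t*b+i) = f (t*b+j) \<Longrightarrow> i = j"
    and rng: "\<And>k. f k < b" and d: "d < b"
  shows "card {k. k < t*b \<and> f k = d} = t"
proof (induction t)
  case 0
  then show ?case by simp
next
  case (Suc t)
  have injf: "inj_on (\<lambda>i. f (t*b+i)) {..<b}"
  proof (rule inj_onI)
    fix x y assume "x \<in> {..<b}" "y \<in> {..<b}" "f (t*b+x) = f (t*b+y)"
    then show "x = y" using inj[of x y t] by simp
  qed
  have img: "(\<lambda>i. f (t*b+i)) ` {..<b} \<subseteq> {..<b}" using rng by auto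
  have "(\<lambda>i. f (t*b+i)) ` {..<b} = {..<b}"
    by (rule endo_inj_surj[OF _ img injf]) simp
  then have "d \<in> (\<lambda>i. f (t*b+i)) ` {..<b}" using d by simp
  then obtain i where i: "i < b" "f (t*b+i) = d" by auto
  have blk: "{k. t*b \<le> k \<and> k < Suc t * b \<and> f k = d} = {t*b+i}"
  proof (rule set_eqI, rule iffI)
    fix k assume "k \<in> {k. t*b \<le> k \<and> k < Suc t * b \<and> f k = d}"
    then have k: "t*b \<le> k" "k < Suc t * b" "f k = d" by auto
    define j where "j = k - t*b"
    have kj: "k = t*b + j" "j < b" using k by (auto simp: j_def)
    then have "f (t*b+j) = f (t*b+i)" using i k by simp
    then have "j = i" using inj[of j i t] kj i by blast
    then show "k \<in> {t*b+i}" using kj by simp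
  next
    fix k assume "k \<in> {t*b+i}"
    then show "k \<in> {k. t*b \<le> k \<and> k < Suc t * b \<and> f k = d}" using i by simp
  qed
  have U: "{k. k < Suc t*b \<and> f k = d} = {k. k < t*b \<and> f k = d} \<union> {k. t*b \<le> k \<and> k < Suc t * b \<and> f k = d}"
    by auto
  have C: "card ({k. k < t*b \<and> f k = d} \<union> {k. t*b \<le> k \<and> k < Suc t * b \<and> f k = d}) = card {k. k < t*b \<and> f k = d} + card {k. t*b \<le> k \<and> k < Suc t * b \<and> f k = d}"
    by (rule card_Un_disjoint[OF fin_aux1 fin_aux2]) auto
  have "card {k. k < Suc t*b \<and> f k = d} = card {k. k < t*b \<and> f k = d} + card {k. t*b \<le> k \<and> k < Suc t * b \<and> f k = d}"
    unfolding U by (rule C)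
  then show ?case using Suc.IH blk by simp
qed

lemma count_bounds:
  fixes f :: "nat \<Rightarrow> nat"
  assumes b: "b > 0"
    and inj: "\<And>t i j. i < b \<Longrightarrow> j < b \<Longrightarrow> f (t*b+i) = f (t*b+j) \<Longrightarrow> i = j"
    and rng: "\<And>k. f k < b" and d: "d < b"
  shows "n div b \<le> card {k. k < n \<and> f k = d} \<and> card {k. k < n \<and> f k = d} \<le> n div b + 1"
proof -
  define q where "q = n div b"
  have ne: "n = q*b + n mod b" by (simp add: q_def)
  have "n mod b < b" using b by simp
  then have nq: "q*b \<le> n" "n < q*b + b" using ne by linarith+
  have A: "card {k. k < q*b \<and> f k = d} = q" by (rule full_count[OF b inj rng d])
  have fin: "finite {k. q*b \<le> k \<and> k < n \<and> f k = d}" by (rule fin_aux2)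
  have B: "card {k. q*b \<le> k \<and> k < n \<and> f k = d} \<le> Suc 0"
    unfolding card_le_Suc0_iff_eq[OF fin]
  proof (intro ballI)
    fix k1 k2 assume "k1 \<in> {k. q*b \<le> k \<and> k < n \<and> f k = d}" "k2 \<in> {k. q*b \<le> k \<and> k < n \<and> f k = d}"
    then have h: "q*b \<le> k1" "k1 < n" "f k1 = d" "q*b \<le> k2" "k2 < n" "f k2 = d" by auto
    have e: "k1 = q*b + (k1 - q*b)" "k2 = q*b + (k2 - q*b)" "k1 - q*b < b" "k2 - q*b < b"
      using h nq by auto
    have "f (q*b + (k1 - q*b)) = f (q*b + (k2 - q*b))" using h e by simp
    then have "k1 - q*b = k2 - q*b" using inj[of "k1 - q*b" "k2 - q*b" q] e(3,4) by blast
    then show "k1 = k2" using e(1,2) by simp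
  qed
  have U: "{k. k < n \<and> f k = d} = {k. k < q*b \<and> f k = d} \<union> {k. q*b \<le> k \<and> k < n \<and> f k = d}"
    using nq by auto
  have C0: "card ({k. k < q*b \<and> f k = d} \<union> {k. q*b \<le> k \<and> k < n \<and> f k = d}) = card {k. k < q*b \<and> f k = d} + card {k. q*b \<le> k \<and> k < n \<and> f k = d}"
    by (rule card_Un_disjoint[OF fin_aux1 fin_aux2]) auto
  have C: "card {k. k < n \<and> f k = d} = card {k. k < q*b \<and> f k = d} + card {k. q*b \<le> k \<and> k < n \<and> f k = d}"
    unfolding U by (rule C0)
  show ?thesis unfolding q_def[symmetric] using A B C by linarith
qed

lemma digit_count_bounds:
  assumes "b \<ge> 2" "d < b"
  shows "n div b \<le> digit_count b n l d \<and> digit_count b n l d \<le> n div b + 1"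
  unfolding digit_count_def
proof (rule count_bounds)
  show "0 < b" using assms by simp
  show "d < b" by fact
  show "enum_vec b n k l < b" for k using assms by (simp add: enum_vec_def Let_def)
  fix t i j assume ij: "i < b" "j < b" "enum_vec b n (t*b+i) l = enum_vec b n (t*b+j) l"
  have di: "(t*b+i) div b = t" "(t*b+i) mod b = i" "(t*b+j) div b = t" "(t*b+j) mod b = j"
    using ij assms by auto
  show "i = j"
  proof (cases "l = 1")
    case True then show ?thesis using ij di by (simp add: enum_vec_def Let_def)
  next
    case False then show ?thesis using ij di mod_inj_aux[of i b j] by (simp add: enum_vec_def Let_def)
  qed
qed

theorem theoremA2:
  fixes b n :: nat
  assumes "b \<ge> 2" and "n \<ge> 1"
  shows "Max {digit_count b n l d | l d. l \<in> {1..enum_len b n} \<and> d < b}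
       - Min {digit_count b n l d | l d. l \<in> {1..enum_len b n} \<and> d < b} \<le> 1"
proof -
  let ?S = "{digit_count b n l d | l d. l \<in> {1..enum_len b n} \<and> d < b}"
  have "n < 2^n" by simp
  also have "2^n \<le> b^n" using assms(1) by (simp add: power_mono)
  finally have "1 \<le> n \<and> n \<le> b^n" using assms(2) by simp
  then have "1 \<le> (LEAST l. 1 \<le> l \<and> n \<le> b ^ l) \<and> n \<le> b ^ (LEAST l. 1 \<le> l \<and> n \<le> b ^ l)"
    by (rule LeastI)
  then have L: "1 \<le> enum_len b n" unfolding enum_len_def by simp
  have sub: "?S \<subseteq> {n div b..n div b + 1}" using digit_count_bounds[OF assms(1)] by auto
  have fin: "finite ?S" by (rule finite_subset[OF sub]) simp
  have "digit_count b n 1 0 \<in> ?S" using L assms(1) by force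
  then have ne: "?S \<noteq> {}" by blast
  have "Max ?S \<in> ?S" using fin ne by (rule Max_in)
  then have "Max ?S \<in> {n div b..n div b + 1}" using sub by (rule rev_subsetD)
  then have "Max ?S \<le> n div b + 1" by (simp only: atLeastAtMost_iff)
  moreover have "Min ?S \<in> ?S" using fin ne by (rule Min_in)
  then have "Min ?S \<in> {n div b..n div b + 1}" using sub by (rule rev_subsetD)
  then have "n div b \<le> Min ?S" by (simp only: atLeastAtMost_iff)
  ultimately show ?thesis by linarith
qed

end
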